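(* For integers $1\le r\le n-1$, the convex hull of $\{\frac{1}{r+1}A: A\in RB(r+1,n)\}$ is contained in the convex hull of $\{\frac1r A: A\in RB(r,n)\}$.
   Context: $RB(r,n)$ is the set of $n\times n$ $0/1$ matrices all of whose row and column sums equal $r$. *)

theory Defs
  imports "HOL-Analysis.Analysis"
begin

text \<open>RB(r,n): n x n 0/1 matrices with all row and column sums equal to r.
  The dimension n is CARD('n) of the finite index type 'n.\<close>
definition RB :: "nat \<Rightarrow> (real^'n^'n) set" where
  "RB r = {A. (\<forall>i j. A $ i $ j = 0 \<or> A $ i $ j = 1)
            \<and> (\<forall>i. (\<Sum>j\<in>UNIV. A $ i $ j) = real r)
            \<and> (\<forall>j. (\<Sum>i\<in>UNIV. A $ i $ j) = real r)}"

end

theory Submission imports Defs begin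


lemma hall:
  "finite I \<Longrightarrow> (\<forall>i\<in>I. finite (N i)) \<Longrightarrow> (\<forall>S\<subseteq>I. card S \<le> card (\<Union>(N ` S)))
   \<Longrightarrow> \<exists>f. inj_on f I \<and> (\<forall>i\<in>I. f i \<in> N i)"
proof (induction "card I" arbitrary: I N rule: less_induct)
  case less
  show ?case
  proof (cases "I = {}")
    case True then show ?thesis by auto
  next
    case ne: False
    show ?thesis
    proof (cases "\<exists>S. S \<subseteq> I \<and> S \<noteq> {} \<and> S \<noteq> I \<and> card (\<Union>(N ` S)) = card S")
      case True
      then obtain S where S: "S \<subseteq> I" "S \<noteq> {}" "S \<noteq> I" "card (\<Union>(N ` S)) = card S" by blast
      define U where "U = \<Union>(N ` S)"
      have finS: "finite S" using S(1) less.prems(1) finite_subset by blast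
      have finU: "finite U" unfolding U_def using finS S(1) less.prems(2) by auto
      have cS: "card S < card I" using S less.prems(1) by (meson psubsetI psubset_card_mono)
      have "\<exists>f. inj_on f S \<and> (\<forall>i\<in>S. f i \<in> N i)"
        proof (rule less.hyps[OF cS finS])
          show "\<forall>i\<in>S. finite (N i)" using less.prems(2) S(1) by auto
          show "\<forall>Sa\<subseteq>S. card Sa \<le> card (\<Union> (N ` Sa))" using less.prems(3) S(1) by auto
        qed
      then obtain f1 where f1: "inj_on f1 S" "\<forall>i\<in>S. f1 i \<in> N i" by blast
      define N2 where "N2 = (\<lambda>i. N i - U)"
      have cI2: "card (I - S) < card I" using S less.prems(1) finS
        by (metis Diff_subset card_Diff_subset card_gt_0_iff diff_less finite_subset inf.absorb_iff2 le_iff_inf ne)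
      have hall2: "\<forall>T\<subseteq>I - S. card T \<le> card (\<Union>(N2 ` T))"
      proof (intro allI impI)
        fix T assume T: "T \<subseteq> I - S"
        have finT: "finite T" using T less.prems(1) finite_subset by blast
        have eq: "\<Union>(N2 ` T) = \<Union>(N ` (T \<union> S)) - U" unfolding N2_def U_def by auto
        have sub: "U \<subseteq> \<Union>(N ` (T \<union> S))" unfolding U_def by auto
        have fin2: "finite (\<Union>(N ` (T \<union> S)))" using finT finS T S(1) less.prems(2) by auto
        have c1: "card (T \<union> S) \<le> card (\<Union>(N ` (T \<union> S)))" using less.prems(3) T S(1) by (metis Diff_subset Un_subset_iff subset_trans)
        have c2: "card (T \<union> S) = card T + card S" using T finT finS by (subst card_Un_disjoint) auto
        have "card (\<Union>(N2 ` T)) = card (\<Union>(N ` (T \<union> S))) - card U"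
          using eq sub fin2 by (simp add: card_Diff_subset finU)
        then show "card T \<le> card (\<Union>(N2 ` T))" using c1 c2 S(4) U_def by simp
      qed
      have "\<exists>f. inj_on f (I - S) \<and> (\<forall>i\<in>I - S. f i \<in> N2 i)"
        by (rule less.hyps[OF cI2 _ _ hall2]) (use less.prems in \<open>auto simp: N2_def\<close>)
      then obtain f2 where f2: "inj_on f2 (I - S)" "\<forall>i\<in>I - S. f2 i \<in> N2 i" by blast
      define f where "f = (\<lambda>i. if i \<in> S then f1 i else f2 i)"
      have "inj_on f I"
        unfolding inj_on_def
      proof (intro ballI impI)
        fix x y assume xy: "x \<in> I" "y \<in> I" "f x = f y"
        show "x = y"
        proof (cases "x \<in> S"; cases "y \<in> S")
          assume "x \<in> S" "y \<in> S" then show ?thesis using xy f1 unfolding f_def inj_on_def by auto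
        next
          assume "x \<notin> S" "y \<notin> S" then show ?thesis using xy f2 unfolding f_def inj_on_def by auto
        next
          assume a: "x \<in> S" "y \<notin> S"
          then have "f x \<in> U" using f1 unfolding f_def U_def by auto
          moreover have "f y \<notin> U" using a f2 xy(2) unfolding f_def N2_def by auto
          ultimately show ?thesis using xy by auto
        next
          assume a: "x \<notin> S" "y \<in> S"
          then have "f y \<in> U" using f1 unfolding f_def U_def by auto
          moreover have "f x \<notin> U" using a f2 xy(1) unfolding f_def N2_def by auto
          ultimately show ?thesis using xy by auto
        qed
      qed
      moreover have "\<forall>i\<in>I. f i \<in> N i" using f1 f2 unfolding f_def N2_def by auto
      ultimately show ?thesis by blast
    next
      case False
      then have strict: "\<And>S. S \<subseteq> I \<Longrightarrow> S \<noteq> {} \<Longrightarrow> S \<noteq> I \<Longrightarrow> card S < card (\<Union>(N ` S))"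
        using less.prems(3) le_neq_implies_less by metis
      obtain i0 where i0: "i0 \<in> I" using ne by blast
      have "card {i0} \<le> card (N i0)" using less.prems(3)[rule_format, of "{i0}"] i0 by simp
      then have "N i0 \<noteq> {}" by auto
      then obtain y where y: "y \<in> N i0" by blast
      define N' where "N' = (\<lambda>i. N i - {y})"
      have cI': "card (I - {i0}) < card I" using i0 less.prems(1) by (metis card_Diff1_less)
      have hall': "\<forall>T\<subseteq>I - {i0}. card T \<le> card (\<Union>(N' ` T))"
      proof (intro allI impI)
        fix T assume T: "T \<subseteq> I - {i0}"
        show "card T \<le> card (\<Union>(N' ` T))"
        proof (cases "T = {}")
          case True then show ?thesis by simp
        next
          case False
          have finT: "finite T" using T less.prems(1) finite_subset by blast
          have fin: "finite (\<Union>(N ` T))" using finT T less.prems(2) by auto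
          have lt: "card T < card (\<Union>(N ` T))" using strict[of T] T False i0 by auto
          have eq: "\<Union>(N' ` T) = \<Union>(N ` T) - {y}" unfolding N'_def by auto
          have "card (\<Union>(N ` T)) - 1 \<le> card (\<Union>(N ` T) - {y})"
            using fin by (simp add: card_Diff_singleton_if)
          then show ?thesis unfolding eq using lt by linarith
        qed
      qed
      have "\<exists>f. inj_on f (I - {i0}) \<and> (\<forall>i\<in>I - {i0}. f i \<in> N' i)"
        by (rule less.hyps[OF cI' _ _ hall']) (use less.prems in \<open>auto simp: N'_def\<close>)
      then obtain f' where f': "inj_on f' (I - {i0})" "\<forall>i\<in>I - {i0}. f' i \<in> N' i" by blast
      define f where "f = f'(i0 := y)"
      have "inj_on f I"
        unfolding inj_on_def
      proof (intro ballI impI)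
        fix a b assume ab: "a \<in> I" "b \<in> I" "f a = f b"
        show "a = b"
          using ab f' unfolding f_def N'_def inj_on_def
          by (cases "a = i0"; cases "b = i0") (simp_all; blast)+
      qed
      moreover have "\<forall>i\<in>I. f i \<in> N i" using f' y unfolding f_def N'_def by auto
      ultimately show ?thesis by blast
    qed
  qed
qed



definition pmat :: "('n::finite \<Rightarrow> 'n) \<Rightarrow> real^'n^'n" where
  "pmat f = (\<chi> i j. if j = f i then 1 else 0)"

lemma pmat_nonneg: "0 \<le> pmat f $ i $ j" by (simp add: pmat_def)

lemma pmat_row: "(\<Sum>j\<in>UNIV. pmat f $ i $ j) = 1" by (simp add: pmat_def)

lemma pmat_col: assumes "bij f" shows "(\<Sum>i\<in>UNIV. pmat f $ i $ j) = 1"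
proof -
  have "(\<Sum>i\<in>UNIV. pmat f $ i $ j) = (\<Sum>i\<in>UNIV. if i = inv f j then 1 else 0)"
    by (rule sum.cong) (auto simp: pmat_def bij_inv_eq_iff[OF assms])
  then show ?thesis by simp
qed

lemma RB_nonneg: "A \<in> RB k \<Longrightarrow> 0 \<le> A $ i $ j"
  unfolding RB_def by (metis (mono_tags, lifting) mem_Collect_eq order_refl zero_le_one)

lemma RB_match:
  fixes B :: "real^'n::finite^'n"
  assumes B: "B \<in> RB k" and k: "1 \<le> k"
  shows "\<exists>f. bij f \<and> (\<forall>i. B $ i $ f i = 1)"
proof -
  define N where "N = (\<lambda>i. {j. B $ i $ j = 1})"
  have hc: "\<forall>S\<subseteq>(UNIV::'n set). card S \<le> card (\<Union>(N ` S))"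
  proof (intro allI impI)
    fix S :: "'n set"
    define U where "U = \<Union>(N ` S)"
    have e1: "(\<Sum>i\<in>S. \<Sum>j\<in>UNIV. B $ i $ j) = real k * card S"
      using B unfolding RB_def by simp
    have e2: "(\<Sum>i\<in>S. \<Sum>j\<in>UNIV. B $ i $ j) = (\<Sum>i\<in>S. \<Sum>j\<in>U. B $ i $ j)"
    proof (rule sum.cong[OF refl])
      fix i assume i: "i \<in> S"
      show "(\<Sum>j\<in>UNIV. B $ i $ j) = (\<Sum>j\<in>U. B $ i $ j)"
      proof (rule sum.mono_neutral_right)
        show "\<forall>j\<in>UNIV - U. B $ i $ j = 0"
        proof
        fix j assume "j \<in> UNIV - U"
        then have "B $ i $ j \<noteq> 1" using i unfolding U_def N_def by auto
        then show "B $ i $ j = 0" using B unfolding RB_def by auto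
        qed
      qed auto
    qed
    have e3: "(\<Sum>i\<in>S. \<Sum>j\<in>U. B $ i $ j) = (\<Sum>j\<in>U. \<Sum>i\<in>S. B $ i $ j)" by (rule sum.swap)
    have e4: "(\<Sum>j\<in>U. \<Sum>i\<in>S. B $ i $ j) \<le> (\<Sum>j\<in>U. \<Sum>i\<in>UNIV. B $ i $ j)"
      by (intro sum_mono sum_mono2) (auto intro: RB_nonneg[OF B])
    have e5: "(\<Sum>j\<in>U. \<Sum>i\<in>UNIV. B $ i $ j) = real k * card U"
      using B unfolding RB_def by simp
    have "real k * card S \<le> real k * card U" using e1 e2 e3 e4 e5 by linarith
    then have "real (card S) \<le> real (card U)" using k by (simp add: mult_le_cancel_left)
    then show "card S \<le> card (\<Union>(N ` S))" unfolding U_def by simp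
  qed
  obtain f where f: "inj_on f UNIV" "\<forall>i\<in>UNIV. f i \<in> N i"
    using hall[of "UNIV::'n set" N] hc by auto
  have "bij f" using f(1) finite_UNIV_inj_surj[of f] by (simp add: bij_def)
  then show ?thesis using f(2) unfolding N_def by auto
qed

lemma RB_sub:
  fixes B :: "real^'n::finite^'n"
  assumes B: "B \<in> RB (Suc k)" and f: "bij f" "\<forall>i. B $ i $ f i = 1"
  shows "B - pmat f \<in> RB k"
proof -
  have a: "\<forall>i j. (B - pmat f) $ i $ j = 0 \<or> (B - pmat f) $ i $ j = 1"
    using B f unfolding RB_def pmat_def by auto
  have b: "\<forall>i. (\<Sum>j\<in>UNIV. (B - pmat f) $ i $ j) = real k"
  proof
    fix i
    have "(\<Sum>j\<in>UNIV. (B - pmat f) $ i $ j) = (\<Sum>j\<in>UNIV. B $ i $ j) - (\<Sum>j\<in>UNIV. pmat f $ i $ j)"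
      by (simp add: sum_subtractf)
    then show "(\<Sum>j\<in>UNIV. (B - pmat f) $ i $ j) = real k" using B pmat_row[of f i] unfolding RB_def by simp
  qed
  have c: "\<forall>j. (\<Sum>i\<in>UNIV. (B - pmat f) $ i $ j) = real k"
  proof
    fix j
    have "(\<Sum>i\<in>UNIV. (B - pmat f) $ i $ j) = (\<Sum>i\<in>UNIV. B $ i $ j) - (\<Sum>i\<in>UNIV. pmat f $ i $ j)"
      by (simp add: sum_subtractf)
    then show "(\<Sum>i\<in>UNIV. (B - pmat f) $ i $ j) = real k" using B pmat_col[OF f(1), of j] unfolding RB_def by simp
  qed
  show ?thesis using a b c unfolding RB_def by blast
qed

lemma RB_zero: "A \<in> RB 0 \<Longrightarrow> A = 0"
proof -
  assume A: "A \<in> RB 0"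
  have "A $ i $ j = 0" for i j
  proof -
    have "(\<Sum>j\<in>UNIV. A $ i $ j) = 0" using A unfolding RB_def by simp
    then show ?thesis using sum_nonneg_eq_0_iff[of UNIV "\<lambda>j. A $ i $ j"] RB_nonneg[OF A] by auto
  qed
  then show ?thesis by (simp add: vec_eq_iff)
qed

lemma RB_decomp:
  fixes A :: "real^'n::finite^'n"
  shows "A \<in> RB m \<Longrightarrow> \<exists>P. (\<forall>l<m. \<exists>f. bij f \<and> P l = pmat f) \<and> A = (\<Sum>l<m. P l)"
proof (induction m arbitrary: A)
  case 0 then show ?case using RB_zero by auto
next
  case (Suc m)
  obtain f where f: "bij f" "\<forall>i. A $ i $ f i = 1" using RB_match[OF Suc.prems] by auto
  obtain P where P: "\<forall>l<m. \<exists>f. bij f \<and> P l = pmat f" "A - pmat f = (\<Sum>l<m. P l)"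
    using Suc.IH[OF RB_sub[OF Suc.prems f]] by blast
  define P' where "P' = P(m := pmat f)"
  have "(\<Sum>l<Suc m. P' l) = (\<Sum>l<m. P l) + pmat f"
    unfolding P'_def by (simp add: sum.lessThan_Suc)
  then have "A = (\<Sum>l<Suc m. P' l)" using P(2) by (simp add: algebra_simps)
  moreover have "\<forall>l<Suc m. \<exists>f. bij f \<and> P' l = pmat f" using P(1) f(1) unfolding P'_def by (auto simp: less_Suc_eq)
  ultimately show ?case by blast
qed



lemma RB_minus:
  fixes A :: "real^'n::finite^'n"
  assumes A: "A \<in> RB (Suc r)" and P: "\<forall>l<Suc r. \<exists>f. bij f \<and> P l = pmat f" "A = (\<Sum>l<Suc r. P l)"
    and k: "k < Suc r"
  shows "A - P k \<in> RB r"
proof -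
  obtain f where f: "bij f" "P k = pmat f" using P(1) k by blast
  have le: "P k $ i $ j \<le> A $ i $ j" for i j
  proof -
    have "A $ i $ j = (\<Sum>l<Suc r. P l $ i $ j)" using P(2) by (simp add: sum_component)
    moreover have "P k $ i $ j \<le> (\<Sum>l<Suc r. P l $ i $ j)"
      proof (rule member_le_sum)
      fix x assume "x \<in> {..<Suc r} - {k}"
      then obtain g where "P x = pmat g" using P(1) by auto
      then show "0 \<le> P x $ i $ j" by (simp add: pmat_nonneg)
    qed (use k in auto)
    ultimately show ?thesis by simp
  qed
  have a: "\<forall>i j. (A - P k) $ i $ j = 0 \<or> (A - P k) $ i $ j = 1"
  proof (intro allI)
    fix i j
    have "A $ i $ j = 0 \<or> A $ i $ j = 1" using A unfolding RB_def by auto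
    moreover have "P k $ i $ j = 0 \<or> P k $ i $ j = 1" unfolding f pmat_def by auto
    ultimately show "(A - P k) $ i $ j = 0 \<or> (A - P k) $ i $ j = 1" using le[of i j] by auto
  qed
  have b: "\<forall>i. (\<Sum>j\<in>UNIV. (A - P k) $ i $ j) = real r"
  proof
    fix i
    have "(\<Sum>j\<in>UNIV. (A - P k) $ i $ j) = (\<Sum>j\<in>UNIV. A $ i $ j) - (\<Sum>j\<in>UNIV. P k $ i $ j)"
      by (simp add: sum_subtractf)
    then show "(\<Sum>j\<in>UNIV. (A - P k) $ i $ j) = real r" using A pmat_row[of f i] f unfolding RB_def by simp
  qed
  have c: "\<forall>j. (\<Sum>i\<in>UNIV. (A - P k) $ i $ j) = real r"
  proof
    fix j
    have "(\<Sum>i\<in>UNIV. (A - P k) $ i $ j) = (\<Sum>i\<in>UNIV. A $ i $ j) - (\<Sum>i\<in>UNIV. P k $ i $ j)"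
      by (simp add: sum_subtractf)
    then show "(\<Sum>i\<in>UNIV. (A - P k) $ i $ j) = real r" using A pmat_col[OF f(1), of j] f unfolding RB_def by simp
  qed
  show ?thesis using a b c unfolding RB_def by blast
qed

theorem corollary5p13:
  fixes r :: nat
  assumes "1 \<le> r" and "r \<le> CARD('n::finite) - 1"
  shows "convex hull ((\<lambda>A. (1 / real (r + 1)) *\<^sub>R A) ` (RB (r + 1) :: (real^'n^'n) set))
         \<subseteq> convex hull ((\<lambda>A. (1 / real r) *\<^sub>R A) ` (RB r :: (real^'n^'n) set))"
proof (rule hull_minimal)
  show "convex (convex hull ((\<lambda>A. (1 / real r) *\<^sub>R A) ` (RB r :: (real^'n^'n) set)))"
    by (rule convex_convex_hull)
  show "(\<lambda>A. (1 / real (r + 1)) *\<^sub>R A) ` (RB (r + 1) :: (real^'n^'n) set)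
        \<subseteq> convex hull ((\<lambda>A. (1 / real r) *\<^sub>R A) ` (RB r :: (real^'n^'n) set))"
  proof
    fix X assume "X \<in> (\<lambda>A. (1 / real (r + 1)) *\<^sub>R A) ` (RB (r + 1) :: (real^'n^'n) set)"
    then obtain A :: "real^'n^'n" where A: "A \<in> RB (Suc r)" and X: "X = (1 / real (r + 1)) *\<^sub>R A" by auto
    obtain P where P: "\<forall>l<Suc r. \<exists>f. bij f \<and> P l = pmat f" "A = (\<Sum>l<Suc r. P l)"
      using RB_decomp[OF A] by blast
    have sumd: "(\<Sum>k<Suc r. A - P k) = real r *\<^sub>R A"
    proof -
      have "(\<Sum>k<Suc r. A - P k) = (\<Sum>k<Suc r. A) - (\<Sum>k<Suc r. P k)" by (simp add: sum_subtractf)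
      also have "\<dots> = real (Suc r) *\<^sub>R A - A"
        using P(2)[symmetric] by (simp only: sum_constant_scaleR card_lessThan)
      also have "\<dots> = real r *\<^sub>R A" by (simp add: algebra_simps)
      finally show ?thesis .
    qed
    have "X = (\<Sum>k<Suc r. (1 / real (r + 1)) *\<^sub>R ((1 / real r) *\<^sub>R (A - P k)))"
    proof -
      have "(\<Sum>k<Suc r. (1 / real (r + 1)) *\<^sub>R ((1 / real r) *\<^sub>R (A - P k)))
            = ((1 / real (r + 1)) * (1 / real r)) *\<^sub>R (\<Sum>k<Suc r. A - P k)"
        by (simp only: scaleR_sum_right scaleR_scaleR)
      also have "\<dots> = X" using assms(1) unfolding sumd X by simp
      finally show ?thesis by simp
    qed
    also have "\<dots> \<in> convex hull ((\<lambda>A. (1 / real r) *\<^sub>R A) ` (RB r :: (real^'n^'n) set))"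
    proof (rule convex_sum)
      show "finite {..<Suc r}" by simp
      show "convex (convex hull ((\<lambda>A. (1 / real r) *\<^sub>R A) ` (RB r :: (real^'n^'n) set)))"
        by (rule convex_convex_hull)
      show "(\<Sum>k<Suc r. 1 / real (r + 1)) = 1" by simp
      show "\<And>i. i \<in> {..<Suc r} \<Longrightarrow> 0 \<le> 1 / real (r + 1)" by simp
      fix k assume "k \<in> {..<Suc r}"
      then have "A - P k \<in> RB r" using RB_minus[OF A P] by simp
      then show "(1 / real r) *\<^sub>R (A - P k) \<in> convex hull ((\<lambda>A. (1 / real r) *\<^sub>R A) ` (RB r :: (real^'n^'n) set))"
        by (intro hull_inc imageI)
    qed
    finally show "X \<in> convex hull ((\<lambda>A. (1 / real r) *\<^sub>R A) ` (RB r :: (real^'n^'n) set))" .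
  qed
qed

end
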